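(* Let $a,b\in\mathbb{C}$ be such that $X=X_{a,b}$ is smooth. If $a^2-ab+b^2\neq0$, then neither $\pi_x$ nor $\pi_y$ contracts any curve. If $a\neq b$, then $\pi_z$ contracts no curve.
   Context: $X_{a,b}\subset\mathbb{P}^1_x\times\mathbb{P}^1_y\times\mathbb{P}^1_z$ is the surface defined by $Q_a z_0^2+(x_0^2y_0^2+x_1^2y_1^2)z_0z_1+Q_b z_1^2=0$ with $Q_c=x_0^2y_1^2+c\,x_0x_1y_0y_1+x_1^2y_0^2$. $\pi_x:X\to\mathbb{P}^1_y\times\mathbb{P}^1_z$, $\pi_y:X\to\mathbb{P}^1_x\times\mathbb{P}^1_z$, $\pi_z:X\to\mathbb{P}^1_x\times\mathbb{P}^1_y$ are the restrictions of the projections. *)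

theory Defs
  imports "HOL-Analysis.Analysis"
begin

text \<open>Points of the complex projective line P^1, represented by normalized
  homogeneous coordinates: [1:t] for t in C, and the point at infinity [0:1].
  Every point [u0:u1] of P^1 has exactly one such representative.\<close>
definition P1 :: "(complex \<times> complex) set" where
  "P1 = {(1, t) | t. True} \<union> {(0, 1)}"

type_synonym pt3 = "(complex \<times> complex) \<times> (complex \<times> complex) \<times> (complex \<times> complex)"

definition Q :: "complex \<Rightarrow> complex \<times> complex \<Rightarrow> complex \<times> complex \<Rightarrow> complex" where
  "Q c x y = (fst x)^2 * (snd y)^2 + c * fst x * snd x * fst y * snd y + (snd x)^2 * (fst y)^2"

definition Fab :: "complex \<Rightarrow> complex \<Rightarrow> complex \<Rightarrow> complex \<Rightarrow> complex \<Rightarrow> complex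
                    \<Rightarrow> complex \<Rightarrow> complex \<Rightarrow> complex" where
  "Fab a b x0 x1 y0 y1 z0 z1 =
     Q a (x0, x1) (y0, y1) * z0^2
     + (x0^2 * y0^2 + x1^2 * y1^2) * z0 * z1
     + Q b (x0, x1) (y0, y1) * z1^2"

definition Xab :: "complex \<Rightarrow> complex \<Rightarrow> pt3 set" where
  "Xab a b = {(x, y, z). x \<in> P1 \<and> y \<in> P1 \<and> z \<in> P1 \<and>
                 Fab a b (fst x) (snd x) (fst y) (snd y) (fst z) (snd z) = 0}"

text \<open>Jacobian criterion: a point of the hypersurface X is singular iff all six
  partial derivatives of the defining multihomogeneous polynomial vanish there.
  X is smooth iff it has no singular point.\<close>
definition singular_point :: "complex \<Rightarrow> complex \<Rightarrow> pt3 \<Rightarrow> bool" where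
  "singular_point a b p = (case p of ((x0, x1), (y0, y1), (z0, z1)) \<Rightarrow>
      deriv (\<lambda>t. Fab a b t x1 y0 y1 z0 z1) x0 = 0 \<and>
      deriv (\<lambda>t. Fab a b x0 t y0 y1 z0 z1) x1 = 0 \<and>
      deriv (\<lambda>t. Fab a b x0 x1 t y1 z0 z1) y0 = 0 \<and>
      deriv (\<lambda>t. Fab a b x0 x1 y0 t z0 z1) y1 = 0 \<and>
      deriv (\<lambda>t. Fab a b x0 x1 y0 y1 t z1) z0 = 0 \<and>
      deriv (\<lambda>t. Fab a b x0 x1 y0 y1 z0 t) z1 = 0)"

definition smooth_X :: "complex \<Rightarrow> complex \<Rightarrow> bool" where
  "smooth_X a b \<longleftrightarrow> (\<forall>p \<in> Xab a b. \<not> singular_point a b p)"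

definition pi_x :: "pt3 \<Rightarrow> (complex \<times> complex) \<times> (complex \<times> complex)" where
  "pi_x p = (case p of (x, y, z) \<Rightarrow> (y, z))"
definition pi_y :: "pt3 \<Rightarrow> (complex \<times> complex) \<times> (complex \<times> complex)" where
  "pi_y p = (case p of (x, y, z) \<Rightarrow> (x, z))"
definition pi_z :: "pt3 \<Rightarrow> (complex \<times> complex) \<times> (complex \<times> complex)" where
  "pi_z p = (case p of (x, y, z) \<Rightarrow> (x, y))"

text \<open>A morphism f : S -> T contracts a curve iff some curve of S is mapped to a
  point, i.e. some fibre of f on S is positive dimensional. Here fibres are
  Zariski-closed subsets of a P^1, so positive-dimensional iff infinite.\<close>
definition contracts_curve :: "('a \<Rightarrow> 'b) \<Rightarrow> 'a set \<Rightarrow> bool" where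
  "contracts_curve f S \<longleftrightarrow> (\<exists>q. infinite {p \<in> S. f p = q})"

end

theory Submission
  imports Defs "HOL-Computational_Algebra.Polynomial"
begin

lemma quad_finite:
  fixes A B C :: complex
  assumes "\<not> (A = 0 \<and> B = 0 \<and> C = 0)"
  shows "finite {t. A + B * t + C * t^2 = 0}"
proof -
  have ne: "[:A, B, C:] \<noteq> 0" using assms by auto
  have "{t. A + B * t + C * t^2 = 0} = {t. poly [:A, B, C:] t = 0}"
    by (auto simp: algebra_simps power2_eq_square)
  then show ?thesis using poly_roots_finite[OF ne] by simp
qed

lemma P1_cases: "u \<in> P1 \<Longrightarrow> (\<And>t. u = (1, t) \<Longrightarrow> P) \<Longrightarrow> (u = (0, 1) \<Longrightarrow> P) \<Longrightarrow> P"
  unfolding P1_def by auto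

definition cA :: "complex \<times> complex \<Rightarrow> complex \<times> complex \<Rightarrow> complex" where
  "cA y z = (snd y)^2 * (fst z)^2 + (fst y)^2 * fst z * snd z + (snd y)^2 * (snd z)^2"
definition cB :: "complex \<Rightarrow> complex \<Rightarrow> complex \<times> complex \<Rightarrow> complex \<times> complex \<Rightarrow> complex" where
  "cB a b y z = fst y * snd y * (a * (fst z)^2 + b * (snd z)^2)"
definition cC :: "complex \<times> complex \<Rightarrow> complex \<times> complex \<Rightarrow> complex" where
  "cC y z = (fst y)^2 * (fst z)^2 + (snd y)^2 * fst z * snd z + (fst y)^2 * (snd z)^2"

lemma Fab_x: "Fab a b 1 t y0 y1 z0 z1 = cA (y0,y1) (z0,z1) + cB a b (y0,y1) (z0,z1) * t + cC (y0,y1) (z0,z1) * t^2"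
  by (simp add: Fab_def Q_def cA_def cB_def cC_def algebra_simps power2_eq_square)

lemma Fab_x0: "Fab a b 0 1 y0 y1 z0 z1 = cC (y0,y1) (z0,z1)"
  by (simp add: Fab_def Q_def cC_def algebra_simps power2_eq_square)

lemma Fab_sym: "Fab a b x0 x1 y0 y1 z0 z1 = Fab a b y0 y1 x0 x1 z0 z1"
  by (simp add: Fab_def Q_def algebra_simps)

lemma Fab_z: "Fab a b x0 x1 y0 y1 1 t = Q a (x0,x1) (y0,y1) + (x0^2 * y0^2 + x1^2 * y1^2) * t + Q b (x0,x1) (y0,y1) * t^2"
  by (simp add: Fab_def algebra_simps)

lemma Fab_z0: "Fab a b x0 x1 y0 y1 0 1 = Q b (x0,x1) (y0,y1)"
  by (simp add: Fab_def)

lemma alg_x: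
  fixes a b :: complex
  assumes "y \<in> P1" "z \<in> P1" "a^2 - a*b + b^2 \<noteq> 0"
  shows "\<not> (cA y z = 0 \<and> cB a b y z = 0 \<and> cC y z = 0)"
proof
  assume H: "cA y z = 0 \<and> cB a b y z = 0 \<and> cC y z = 0"
  show False
  proof (rule P1_cases[OF assms(1)])
    assume y: "y = (0,1)"
    show False
    proof (rule P1_cases[OF assms(2)])
      fix s assume "z = (1,s)" then show False using H y by (auto simp: cA_def cC_def)
    next
      assume "z = (0,1)" then show False using H y by (simp add: cA_def cC_def)
    qed
  next
    fix t assume yt: "y = (1,t)"
    show False
    proof (rule P1_cases[OF assms(2)])
      assume "z = (0,1)" then show False using H yt by (simp add: cA_def cC_def)
    next
      fix s assume zs: "z = (1,s)"
      have A: "t^2 + s + t^2 * s^2 = 0" and B: "t * (a + b * s^2) = 0" and C: "1 + t^2 * s + s^2 = 0"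
        using H yt zs by (simp_all add: cA_def cB_def cC_def)
      have t0: "t \<noteq> 0" using A C by auto
      with B have "a + b * s^2 = 0" by simp
      then have ab: "a = - b * s^2" by (simp add: eq_neg_iff_add_eq_0)
      have fac: "a^2 - a*b + b^2 = b^2 * ((s^2 + s + 1) * (s^2 - s + 1))"
        unfolding ab by (simp add: algebra_simps power2_eq_square)
      have "(t^2 - 1) * (s^2 - s + 1) = (t^2 + s + t^2 * s^2) - (1 + t^2 * s + s^2)"
        by (simp add: algebra_simps power2_eq_square)
      then have "(t^2 - 1) * (s^2 - s + 1) = 0" using A C by simp
      then have "s^2 - s + 1 = 0 \<or> t^2 = 1" by auto
      moreover have "t^2 = 1 \<Longrightarrow> s^2 + s + 1 = 0" using A by (simp add: algebra_simps)
      ultimately have "a^2 - a*b + b^2 = 0" using fac by auto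
      then show False using assms(3) by simp
    qed
  qed
qed

lemma alg_z:
  fixes a b :: complex
  assumes "u \<in> P1" "v \<in> P1" "a \<noteq> b"
  shows "\<not> (Q a u v = 0 \<and> (fst u^2 * fst v^2 + snd u^2 * snd v^2) = 0 \<and> Q b u v = 0)"
proof
  assume H: "Q a u v = 0 \<and> (fst u^2 * fst v^2 + snd u^2 * snd v^2) = 0 \<and> Q b u v = 0"
  have "Q a u v - Q b u v = (a - b) * (fst u * snd u * fst v * snd v)"
    by (simp add: Q_def algebra_simps)
  then have 0: "fst u * snd u * fst v * snd v = 0" using H assms(3) by simp
  show False
  proof (rule P1_cases[OF assms(1)])
    fix s assume u: "u = (1,s)"
    show False
    proof (rule P1_cases[OF assms(2)])
      fix t assume v: "v = (1,t)"
      have "s = 0 \<or> t = 0" using 0 u v by simp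
      then show False using H u v by (auto simp: Q_def)
    next
      assume v: "v = (0,1)" show False using H u v by (simp add: Q_def)
    qed
  next
    assume u: "u = (0,1)"
    show False
    proof (rule P1_cases[OF assms(2)])
      fix t assume v: "v = (1,t)"
      show False using H u v by (simp add: Q_def)
    next
      assume v: "v = (0,1)" show False using H u v by (simp add: Q_def)
    qed
  qed
qed

lemma fib_x:
  assumes "a^2 - a*b + b^2 \<noteq> 0"
  shows "finite {p \<in> Xab a b. pi_x p = q}"
proof (cases "fst q \<in> P1 \<and> snd q \<in> P1")
  case True
  obtain v w where q: "q = (v, w)" by (cases q) auto
  let ?R = "{t. cA v w + cB a b v w * t + cC v w * t^2 = 0}"
  have fin: "finite ?R"
    using quad_finite alg_x[OF _ _ assms] True q by auto
  have "{p \<in> Xab a b. pi_x p = q} \<subseteq> (\<lambda>t. ((1,t),v,w)) ` ?R \<union> {((0,1),v,w)}"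
  proof
    fix p assume "p \<in> {p \<in> Xab a b. pi_x p = q}"
    then obtain x where p: "p = (x,v,w)" "x \<in> P1" "Fab a b (fst x) (snd x) (fst v) (snd v) (fst w) (snd w) = 0"
      by (auto simp: Xab_def pi_x_def q)
    show "p \<in> (\<lambda>t. ((1,t),v,w)) ` ?R \<union> {((0,1),v,w)}"
    proof (rule P1_cases[OF p(2)])
      fix t assume x: "x = (1,t)"
      then have "t \<in> ?R" using p(3) Fab_x[of a b t "fst v" "snd v" "fst w" "snd w"] by simp
      then show ?thesis using p(1) x by blast
    qed (use p in simp)
  qed
  then show ?thesis using fin by (meson finite.emptyI finite.insertI finite_UnI finite_imageI finite_subset)
next
  case False
  have "\<And>p. p \<in> Xab a b \<Longrightarrow> pi_x p = q \<Longrightarrow> False"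
    using False by (auto simp: Xab_def pi_x_def)
  then have "{p \<in> Xab a b. pi_x p = q} = {}" by blast
  then show ?thesis by (metis finite.emptyI)
qed

lemma fib_y:
  assumes "a^2 - a*b + b^2 \<noteq> 0"
  shows "finite {p \<in> Xab a b. pi_y p = q}"
proof (cases "fst q \<in> P1 \<and> snd q \<in> P1")
  case True
  obtain v w where q: "q = (v, w)" by (cases q) auto
  let ?R = "{t. cA v w + cB a b v w * t + cC v w * t^2 = 0}"
  have fin: "finite ?R"
    using quad_finite alg_x[OF _ _ assms] True q by auto
  have "{p \<in> Xab a b. pi_y p = q} \<subseteq> (\<lambda>t. (v,(1,t),w)) ` ?R \<union> {(v,(0,1),w)}"
  proof
    fix p assume "p \<in> {p \<in> Xab a b. pi_y p = q}"
    then obtain x where p: "p = (v,x,w)" "x \<in> P1" "Fab a b (fst v) (snd v) (fst x) (snd x) (fst w) (snd w) = 0"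
      by (auto simp: Xab_def pi_y_def q)
    then have p3: "Fab a b (fst x) (snd x) (fst v) (snd v) (fst w) (snd w) = 0"
      using Fab_sym by metis
    show "p \<in> (\<lambda>t. (v,(1,t),w)) ` ?R \<union> {(v,(0,1),w)}"
    proof (rule P1_cases[OF p(2)])
      fix t assume x: "x = (1,t)"
      then have "t \<in> ?R" using p3 Fab_x[of a b t "fst v" "snd v" "fst w" "snd w"] by simp
      then show ?thesis using p(1) x by blast
    qed (use p in simp)
  qed
  then show ?thesis using fin by (meson finite.emptyI finite.insertI finite_UnI finite_imageI finite_subset)
next
  case False
  have "\<And>p. p \<in> Xab a b \<Longrightarrow> pi_y p = q \<Longrightarrow> False"
    using False by (auto simp: Xab_def pi_y_def)
  then have "{p \<in> Xab a b. pi_y p = q} = {}" by blast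
  then show ?thesis by (metis finite.emptyI)
qed

lemma fib_z:
  assumes "a \<noteq> b"
  shows "finite {p \<in> Xab a b. pi_z p = q}"
proof (cases "fst q \<in> P1 \<and> snd q \<in> P1")
  case True
  obtain u v where q: "q = (u, v)" by (cases q) auto
  let ?R = "{t. Q a u v + (fst u^2 * fst v^2 + snd u^2 * snd v^2) * t + Q b u v * t^2 = 0}"
  have fin: "finite ?R"
    using quad_finite alg_z[OF _ _ assms] True q by auto
  have "{p \<in> Xab a b. pi_z p = q} \<subseteq> (\<lambda>t. (u,v,(1,t))) ` ?R \<union> {(u,v,(0,1))}"
  proof
    fix p assume "p \<in> {p \<in> Xab a b. pi_z p = q}"
    then obtain z where p: "p = (u,v,z)" "z \<in> P1" "Fab a b (fst u) (snd u) (fst v) (snd v) (fst z) (snd z) = 0"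
      by (auto simp: Xab_def pi_z_def q)
    show "p \<in> (\<lambda>t. (u,v,(1,t))) ` ?R \<union> {(u,v,(0,1))}"
    proof (rule P1_cases[OF p(2)])
      fix t assume z: "z = (1,t)"
      then have "t \<in> ?R" using p(3) Fab_z[of a b "fst u" "snd u" "fst v" "snd v" t] by simp
      then show ?thesis using p(1) z by blast
    qed (use p in simp)
  qed
  then show ?thesis using fin by (meson finite.emptyI finite.insertI finite_UnI finite_imageI finite_subset)
next
  case False
  have "\<And>p. p \<in> Xab a b \<Longrightarrow> pi_z p = q \<Longrightarrow> False"
    using False by (auto simp: Xab_def pi_z_def)
  then have "{p \<in> Xab a b. pi_z p = q} = {}" by blast
  then show ?thesis by (metis finite.emptyI)
qed

theorem lemma4p2:
  fixes a b :: complex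
  assumes "smooth_X a b"
  shows "(a^2 - a*b + b^2 \<noteq> 0 \<longrightarrow>
            \<not> contracts_curve pi_x (Xab a b) \<and> \<not> contracts_curve pi_y (Xab a b))
       \<and> (a \<noteq> b \<longrightarrow> \<not> contracts_curve pi_z (Xab a b))"
  unfolding contracts_curve_def using fib_x fib_y fib_z by blast

end
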